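(* A lattice polytope $Q\subset\mathbb R^{\widetilde E}$ is a deformation of the polystellahedral fan $\Sigma_{\mathbf a}$ (i.e. its inner normal fan coarsens $\Sigma_{\mathbf a}$) if and only if $Q$ is a translate of $I(\pi^*(\mathrm P))$ for some polymatroid $\mathrm P$ on $E$ (of arbitrary type).
   Context: $E=\{1,\dots,m\}$, $\mathbf a\in\mathbb Z_{\ge0}^m$, $n=\sum a_i$, $\widetilde E$ an $n$-element set, $\pi:\widetilde E\to E$ with $|\pi^{-1}(i)|=a_i$, $\mathbf e_U=\sum_{j\in U}\mathbf e_j$. The polystellahedral fan $\Sigma_{\mathbf a}$ in $\mathbb R^{\widetilde E}$ has cones $\operatorname{cone}(-\mathbf e_{\widetilde E\setminus\pi^{-1}(F_1)},\dots,-\mathbf e_{\widetilde E\setminus\pi^{-1}(F_k)},\mathbf e_j:j\in I)$ for $I\subseteq\widetilde E$ and chains $F_1\subsetneq\dots\subsetneq F_k\subsetneq F_{k+1}=E$ ($k\ge0$) with $\pi^{-1}(A)\subseteq I\Rightarrow A\subseteq F_1$. A polymatroid on $E$ of arbitrary type is a submodular monotone $\operatorname{rk}_{\mathrm P}:2^E\to\mathbb Z_{\ge0}$ with $\operatorname{rk}_{\mathrm P}(\emptyset)=0$; its independence polytope is $I(\mathrm P)=\{x\in\mathbb R^E_{\ge0}:\sum_{i\in S}x_i\le\operatorname{rk}_{\mathrm P}(S)\ \forall S\subseteq E\}$. The expansion $\pi^*(\mathrm P)$ is the polymatroid on $\widetilde E$ with rank function $\operatorname{rk}_{\mathrm P}\circ\pi$;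 equivalently $I(\pi^*(\mathrm P))=p_\pi^{-1}(I(\mathrm P))\cap\mathbb R^{\widetilde E}_{\ge0}$ where $p_\pi:\mathbb R^{\widetilde E}\to\mathbb R^E$, $\mathbf e_j\mapsto\mathbf e_{\pi(j)}$. *)

theory Defs
  imports "HOL-Analysis.Analysis"
begin

text \<open>Ground sets: the expanded ground set \<open>E~\<close> is the finite type \<open>'n\<close>
  (so \<open>\<real>^E~\<close> is \<open>real^'n\<close>), the ground set \<open>E\<close> is the finite type \<open>'m\<close>,
  and \<open>\<pi> :: 'n \<Rightarrow> 'm\<close>; then \<open>a_i = |\<pi>^-1(i)|\<close>.\<close>

definition ind_vec :: "'n::finite set \<Rightarrow> real^'n" where
  "ind_vec U = (\<chi> j. if j \<in> U then 1 else 0)"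

definition cone_gen :: "(real^'n::finite) set \<Rightarrow> (real^'n) set" where
  "cone_gen S = {x. \<exists>c. (\<forall>v\<in>S. 0 \<le> c v) \<and> x = (\<Sum>v\<in>S. c v *\<^sub>R v)}"

definition proper_chain :: "'m::finite set list \<Rightarrow> bool" where
  "proper_chain Fs \<longleftrightarrow> sorted_wrt (\<subset>) Fs \<and> (\<forall>F\<in>set Fs. F \<subset> UNIV)"

definition first_flat :: "'m::finite set list \<Rightarrow> 'm set" where
  "first_flat Fs = (if Fs = [] then UNIV else hd Fs)"

definition polystellahedral_fan :: "('n::finite \<Rightarrow> 'm::finite) \<Rightarrow> (real^'n) set set" where
  "polystellahedral_fan \<pi> =
    {cone_gen ((\<lambda>F. - ind_vec (UNIV - \<pi> -` F)) ` set Fs \<union> (\<lambda>j. axis j 1) ` I)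
      | Fs I. proper_chain Fs \<and>
              (\<forall>A. \<pi> -` A \<subseteq> I \<longrightarrow> A \<subseteq> first_flat Fs)}"

definition inner_normal_cone :: "(real^'n::finite) set \<Rightarrow> (real^'n) set \<Rightarrow> (real^'n) set" where
  "inner_normal_cone Q F = {w. \<forall>x\<in>F. \<forall>y\<in>Q. w \<bullet> x \<le> w \<bullet> y}"

definition inner_normal_fan :: "(real^'n::finite) set \<Rightarrow> (real^'n) set set" where
  "inner_normal_fan Q = {inner_normal_cone Q F | F. F face_of Q \<and> F \<noteq> {}}"

definition coarsens :: "('a::real_vector) set set \<Rightarrow> 'a set set \<Rightarrow> bool" where
  "coarsens N \<Sigma> \<longleftrightarrow> (\<forall>\<sigma>\<in>\<Sigma>. \<exists>C\<in>N. \<sigma> \<subseteq> C) \<and> \<Union>N = \<Union>\<Sigma>"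

definition is_deformation_of :: "(real^'n::finite) set \<Rightarrow> (real^'n) set set \<Rightarrow> bool" where
  "is_deformation_of Q \<Sigma> \<longleftrightarrow> coarsens (inner_normal_fan Q) \<Sigma>"

definition lattice_polytope :: "(real^'n::finite) set \<Rightarrow> bool" where
  "lattice_polytope Q \<longleftrightarrow>
     (\<exists>S. finite S \<and> (\<forall>x\<in>S. \<forall>i. x $ i \<in> \<int>) \<and> Q = convex hull S)"

definition polymatroid :: "('m set \<Rightarrow> nat) \<Rightarrow> bool" where
  "polymatroid rk \<longleftrightarrow> rk {} = 0 \<and>
     (\<forall>A B. A \<subseteq> B \<longrightarrow> rk A \<le> rk B) \<and>
     (\<forall>A B. rk (A \<union> B) + rk (A \<inter> B) \<le> rk A + rk B)"

definition independence_polytope :: "('n::finite set \<Rightarrow> nat) \<Rightarrow> (real^'n) set" where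
  "independence_polytope rk =
     {x. (\<forall>i. 0 \<le> x $ i) \<and> (\<forall>S. (\<Sum>i\<in>S. x $ i) \<le> real (rk S))}"

definition expansion :: "('n \<Rightarrow> 'm) \<Rightarrow> ('m set \<Rightarrow> nat) \<Rightarrow> ('n set \<Rightarrow> nat)" where
  "expansion \<pi> rk = (\<lambda>S. rk (\<pi> ` S))"

end

theory Submission
  imports Defs
begin

lemma cone_gen_zero: "0 \<in> cone_gen S"
  unfolding cone_gen_def by (rule CollectI, rule exI[of _ "\<lambda>_. 0"]) simp

lemma cone_gen_add: "x \<in> cone_gen S \<Longrightarrow> y \<in> cone_gen S \<Longrightarrow> x + y \<in> cone_gen S"
  unfolding cone_gen_def
proof clarify
  fix c d :: "real^'a \<Rightarrow> real" assume "\<forall>v\<in>S. 0 \<le> c v" "\<forall>v\<in>S. 0 \<le> d v"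
  then show "\<exists>e. (\<forall>v\<in>S. 0 \<le> e v) \<and> (\<Sum>v\<in>S. c v *\<^sub>R v) + (\<Sum>v\<in>S. d v *\<^sub>R v) = (\<Sum>v\<in>S. e v *\<^sub>R v)"
    by (intro exI[of _ "\<lambda>v. c v + d v"]) (simp add: sum.distrib scaleR_add_left)
qed

lemma cone_gen_scale: "x \<in> cone_gen S \<Longrightarrow> 0 \<le> a \<Longrightarrow> a *\<^sub>R x \<in> cone_gen S"
  unfolding cone_gen_def
proof clarify
  fix c :: "real^'a \<Rightarrow> real" assume "\<forall>v\<in>S. 0 \<le> c v" "0 \<le> a"
  then show "\<exists>e. (\<forall>v\<in>S. 0 \<le> e v) \<and> a *\<^sub>R (\<Sum>v\<in>S. c v *\<^sub>R v) = (\<Sum>v\<in>S. e v *\<^sub>R v)"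
    by (intro exI[of _ "\<lambda>v. a * c v"]) (simp add: scaleR_sum_right)
qed

lemma cone_gen_mono: "S \<subseteq> T \<Longrightarrow> finite T \<Longrightarrow> cone_gen S \<subseteq> cone_gen T"
  unfolding cone_gen_def
proof clarify
  fix c :: "real^'a \<Rightarrow> real" assume st: "S \<subseteq> T" "finite T" and c: "\<forall>v\<in>S. 0 \<le> c v"
  show "\<exists>e. (\<forall>v\<in>T. 0 \<le> e v) \<and> (\<Sum>v\<in>S. c v *\<^sub>R v) = (\<Sum>v\<in>T. e v *\<^sub>R v)"
  proof (intro exI[of _ "\<lambda>v. if v \<in> S then c v else 0"] conjI)
    show "\<forall>v\<in>T. 0 \<le> (if v \<in> S then c v else 0)" using c by auto
    have "(\<Sum>v\<in>T. (if v \<in> S then c v else 0) *\<^sub>R v) = (\<Sum>v\<in>T. if v \<in> S then c v *\<^sub>R v else 0)"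
      by (rule sum.cong) auto
    also have "\<dots> = (\<Sum>v\<in>T \<inter> S. c v *\<^sub>R v)" using st by (simp add: sum.inter_restrict)
    also have "T \<inter> S = S" using st by auto
    finally show "(\<Sum>v\<in>S. c v *\<^sub>R v) = (\<Sum>v\<in>T. (if v \<in> S then c v else 0) *\<^sub>R v)" by simp
  qed
qed

lemma cone_gen_gen: "v \<in> S \<Longrightarrow> finite S \<Longrightarrow> v \<in> cone_gen S"
  unfolding cone_gen_def
proof (rule CollectI, rule exI[of _ "\<lambda>u. if u = v then 1 else 0"], intro conjI)
  assume "v \<in> S" "finite S"
  have "(\<Sum>u\<in>S. (if u = v then 1 else 0) *\<^sub>R u) = (\<Sum>u\<in>S. if u = v then u else 0)"
    by (rule sum.cong) auto
  also have "\<dots> = v" using \<open>v \<in> S\<close> \<open>finite S\<close> by (simp add: sum.delta)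
  finally show "v = (\<Sum>u\<in>S. (if u = v then 1 else 0) *\<^sub>R u)" by simp
qed auto

lemma cone_gen_sum: "finite K \<Longrightarrow> (\<And>k. k \<in> K \<Longrightarrow> f k \<in> cone_gen S) \<Longrightarrow> sum f K \<in> cone_gen S"
  by (induction K rule: finite_induct) (auto simp: cone_gen_zero cone_gen_add)

lemma cone_gen_ineq:
  assumes "w \<in> cone_gen S" "\<And>g. g \<in> S \<Longrightarrow> g \<bullet> y \<le> g \<bullet> z"
  shows "w \<bullet> y \<le> w \<bullet> z"
proof -
  obtain c where c: "\<forall>v\<in>S. 0 \<le> c v" "w = (\<Sum>v\<in>S. c v *\<^sub>R v)" using assms(1) unfolding cone_gen_def by auto
  have "w \<bullet> y = (\<Sum>v\<in>S. c v * (v \<bullet> y))" by (simp add: c(2) inner_sum_left)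
  also have "\<dots> \<le> (\<Sum>v\<in>S. c v * (v \<bullet> z))"
    by (rule sum_mono) (simp add: assms(2) c(1) mult_left_mono)
  also have "\<dots> = w \<bullet> z" by (simp add: c(2) inner_sum_left)
  finally show ?thesis .
qed

lemma ind_vec_inner: "ind_vec X \<bullet> (x::real^'n::finite) = (\<Sum>j\<in>X. x $ j)"
proof -
  have "ind_vec X \<bullet> x = (\<Sum>j\<in>UNIV. if j \<in> X then x $ j else 0)"
    unfolding inner_vec_def ind_vec_def by (rule sum.cong) auto
  also have "\<dots> = (\<Sum>j\<in>X. x $ j)" by (simp add: sum.If_cases)
  finally show ?thesis .
qed

lemma axis_inner: "axis j (1::real) \<bullet> (x::real^'n::finite) = x $ j"
  by (simp add: inner_axis')

lemma sorted_wrt_cmp: "sorted_wrt R xs \<Longrightarrow> a \<in> set xs \<Longrightarrow> b \<in> set xs \<Longrightarrow> a = b \<or> R a b \<or> R b a"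
  by (induction xs) auto

lemma greedy_aux:
  fixes rk :: "'m::finite set \<Rightarrow> nat" and ord :: "'m \<Rightarrow> nat"
  assumes poly: "polymatroid rk" and inj: "inj ord"
  shows "\<forall>A. A \<subseteq> {i. ord i < n} \<longrightarrow>
     (\<Sum>i\<in>A. real (rk (insert i {i'. ord i' < ord i})) - real (rk {i'. ord i' < ord i})) \<le> real (rk A)
   \<and> ((\<forall>i\<in>A. \<forall>i'. ord i' < ord i \<longrightarrow> i' \<in> A) \<longrightarrow>
     (\<Sum>i\<in>A. real (rk (insert i {i'. ord i' < ord i})) - real (rk {i'. ord i' < ord i})) = real (rk A))"
proof (induction n)
  case 0
  have "rk {} = 0" using poly unfolding polymatroid_def by auto
  then show ?case by auto
next
  case (Suc n)
  let ?y = "\<lambda>i. real (rk (insert i {i'. ord i' < ord i})) - real (rk {i'. ord i' < ord i})"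
  show ?case
  proof (intro allI impI)
    fix A assume A: "A \<subseteq> {i. ord i < Suc n}"
    show "sum ?y A \<le> real (rk A) \<and> ((\<forall>i\<in>A. \<forall>i'. ord i' < ord i \<longrightarrow> i' \<in> A) \<longrightarrow> sum ?y A = real (rk A))"
    proof (cases "\<exists>a\<in>A. ord a = n")
      case False
      then have "A \<subseteq> {i. ord i < n}" using A by fastforce
      then show ?thesis using Suc.IH by blast
    next
      case True
      then obtain a where a: "a \<in> A" "ord a = n" by blast
      have pre: "{i'. ord i' < ord a} = {i'. ord i' < n}" using a by simp
      have Am: "A - {a} \<subseteq> {i. ord i < n}"
      proof
        fix x assume x: "x \<in> A - {a}"
        then have "ord x \<noteq> ord a" using inj by (metis DiffE injD singletonI)
        then show "x \<in> {i. ord i < n}" using x A a by auto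
      qed
      have sumA: "sum ?y A = sum ?y (A - {a}) + ?y a"
        using a by (simp add: sum.remove add.commute)
      have un: "A \<union> {i'. ord i' < n} = insert a {i'. ord i' < n}"
      proof (intro equalityI subsetI)
        fix x assume x: "x \<in> A \<union> {i'. ord i' < n}"
        show "x \<in> insert a {i'. ord i' < n}"
        proof (cases "x = a")
          case False
          then have "ord x \<noteq> ord a" using inj by (metis injD)
          then show ?thesis using x A a by auto
        qed simp
      qed (use a in auto)
      have it: "A \<inter> {i'. ord i' < n} = A - {a}" using a Am by auto
      have sub: "rk (A \<union> {i'. ord i' < n}) + rk (A \<inter> {i'. ord i' < n}) \<le> rk A + rk {i'. ord i' < n}"
        using poly unfolding polymatroid_def by blast
      have ya: "?y a \<le> real (rk A) - real (rk (A - {a}))"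
        using sub unfolding un it pre by linarith
      have ih1: "sum ?y (A - {a}) \<le> real (rk (A - {a}))" using Suc.IH Am by blast
      have part1: "sum ?y A \<le> real (rk A)" using sumA ya ih1 by linarith
      have part2: "sum ?y A = real (rk A)" if dc: "\<forall>i\<in>A. \<forall>i'. ord i' < ord i \<longrightarrow> i' \<in> A"
      proof -
        have Aeq: "A = insert a {i'. ord i' < n}" using un dc a by auto
        have Am2: "A - {a} = {i'. ord i' < n}" using Aeq a by auto
        have dc2: "\<forall>i\<in>A - {a}. \<forall>i'. ord i' < ord i \<longrightarrow> i' \<in> A - {a}" using Am2 by auto
        have "sum ?y (A - {a}) = real (rk (A - {a}))" using Suc.IH Am dc2 by blast
        then show ?thesis using sumA Aeq Am2 pre by simp
      qed
      show ?thesis using part1 part2 by blast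
    qed
  qed
qed

lemma greedy:
  fixes rk :: "'m::finite set \<Rightarrow> nat" and ord :: "'m \<Rightarrow> nat"
  assumes poly: "polymatroid rk" and inj: "inj ord"
  shows "(\<Sum>i\<in>A. real (rk (insert i {i'. ord i' < ord i})) - real (rk {i'. ord i' < ord i})) \<le> real (rk A)"
    and "(\<forall>i\<in>A. \<forall>i'. ord i' < ord i \<longrightarrow> i' \<in> A) \<Longrightarrow>
     (\<Sum>i\<in>A. real (rk (insert i {i'. ord i' < ord i})) - real (rk {i'. ord i' < ord i})) = real (rk A)"
proof -
  have "A \<subseteq> {i. ord i < Suc (Max (range ord))}"
    using Max_ge[of "range ord"] by (simp add: subset_eq less_Suc_eq_le)
  then show "(\<Sum>i\<in>A. real (rk (insert i {i'. ord i' < ord i})) - real (rk {i'. ord i' < ord i})) \<le> real (rk A)"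
    and "(\<forall>i\<in>A. \<forall>i'. ord i' < ord i \<longrightarrow> i' \<in> A) \<Longrightarrow>
     (\<Sum>i\<in>A. real (rk (insert i {i'. ord i' < ord i})) - real (rk {i'. ord i' < ord i})) = real (rk A)"
    using greedy_aux[OF poly inj, of "Suc (Max (range ord))"] by blast+
qed

lemma greedy_nonneg:
  fixes rk :: "'m::finite set \<Rightarrow> nat"
  assumes poly: "polymatroid rk"
  shows "0 \<le> real (rk (insert i X)) - real (rk X)"
  using poly unfolding polymatroid_def by (simp add: subset_insertI)

lemma chain_cone_aux:
  fixes \<pi> :: "'n::finite \<Rightarrow> 'm::finite"
  shows "\<forall>g::'m \<Rightarrow> real. card (g ` UNIV \<inter> {0<..}) = N \<longrightarrow> (\<forall>i. 0 \<le> g i) \<longrightarrow>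
    (\<chi> j. - g (\<pi> j)) \<in> cone_gen ((\<lambda>s. - ind_vec (UNIV - \<pi> -` {i. g i < s})) ` (g ` UNIV \<inter> {0<..}))"
proof (induction N rule: less_induct)
  case (less N)
  show ?case
  proof (intro allI impI)
    fix g :: "'m \<Rightarrow> real"
    assume card: "card (g ` UNIV \<inter> {0<..}) = N" and nn: "\<forall>i. 0 \<le> g i"
    define V where "V = g ` UNIV \<inter> {0<..}"
    have finV: "finite V" unfolding V_def by simp
    let ?G = "(\<lambda>s. - ind_vec (UNIV - \<pi> -` {i. g i < s})) ` V"
    have finG: "finite ?G" using finV by simp
    have main: "(\<chi> j. - g (\<pi> j)) \<in> cone_gen ?G"
    proof (cases "V = {}")
      case True
      then have "\<forall>i. g i = 0" using nn unfolding V_def by (metis IntI UNIV_I empty_iff greaterThan_iff image_eqI order_le_less)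
      then have "(\<chi> j. - g (\<pi> j)) = 0" by (simp add: vec_eq_iff)
      then show ?thesis by (simp add: cone_gen_zero)
    next
      case False
      define s0 where "s0 = Min V"
      have s0V: "s0 \<in> V" unfolding s0_def using False finV by simp
      have s0pos: "0 < s0" using s0V unfolding V_def by auto
      have s0min: "\<And>i. 0 < g i \<Longrightarrow> s0 \<le> g i" unfolding s0_def using finV by (simp add: V_def)
      define g' where "g' = (\<lambda>i. if 0 < g i then g i - s0 else 0)"
      have nn': "\<forall>i. 0 \<le> g' i" using s0min unfolding g'_def by auto
      define V' where "V' = g' ` UNIV \<inter> {0<..}"
      have V'eq: "V' = (\<lambda>s. s - s0) ` (V - {s0})"
      proof (intro equalityI subsetI)
        fix x assume "x \<in> V'"
        then obtain i where i: "x = g' i" "0 < g' i" unfolding V'_def by auto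
        then have gi: "0 < g i" "x = g i - s0" unfolding g'_def by (auto split: if_splits)
        then have "g i \<in> V - {s0}" using i unfolding V_def by auto
        then show "x \<in> (\<lambda>s. s - s0) ` (V - {s0})" using gi by auto
      next
        fix x assume "x \<in> (\<lambda>s. s - s0) ` (V - {s0})"
        then obtain i where i: "x = g i - s0" "0 < g i" "g i \<noteq> s0" unfolding V_def by auto
        then have "g' i = x" "0 < x" using s0min[of i] unfolding g'_def by auto
        then show "x \<in> V'" unfolding V'_def by auto
      qed
      have cardlt: "card V' < N"
      proof -
        have "card V' \<le> card (V - {s0})" unfolding V'eq using finV by (simp add: card_image_le)
        also have "\<dots> < card V" using finV s0V by (metis card_Diff1_less)
        finally show ?thesis using card unfolding V_def by simp
      qed
      have IH: "(\<chi> j. - g' (\<pi> j)) \<in> cone_gen ((\<lambda>s. - ind_vec (UNIV - \<pi> -` {i. g' i < s})) ` V')"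
        using less.IH[OF cardlt] nn' unfolding V'_def by blast
      have sub: "(\<lambda>s. - ind_vec (UNIV - \<pi> -` {i. g' i < s})) ` V' \<subseteq> ?G"
      proof
        fix v assume "v \<in> (\<lambda>s. - ind_vec (UNIV - \<pi> -` {i. g' i < s})) ` V'"
        then obtain s where s: "s \<in> V - {s0}" "v = - ind_vec (UNIV - \<pi> -` {i. g' i < s - s0})"
          unfolding V'eq by auto
        have "s0 < s" using s(1) s0min unfolding V_def by force
        then have "{i. g' i < s - s0} = {i. g i < s}" unfolding g'_def using s0pos by auto
        then show "v \<in> ?G" using s by auto
      qed
      have part: "(\<chi> j. - g' (\<pi> j)) \<in> cone_gen ?G" using IH cone_gen_mono[OF sub finG] by blast
      have vmem: "- ind_vec (UNIV - \<pi> -` {i. g i < s0}) \<in> cone_gen ?G"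
        using s0V finG by (intro cone_gen_gen) auto
      have decomp: "(\<chi> j. - g (\<pi> j)) = s0 *\<^sub>R (- ind_vec (UNIV - \<pi> -` {i. g i < s0})) + (\<chi> j. - g' (\<pi> j))"
      proof (subst vec_eq_iff, intro allI)
        fix j
        show "(\<chi> j. - g (\<pi> j)) $ j = (s0 *\<^sub>R (- ind_vec (UNIV - \<pi> -` {i. g i < s0})) + (\<chi> j. - g' (\<pi> j))) $ j"
          using s0min[of "\<pi> j"] nn s0pos unfolding ind_vec_def g'_def
          by (cases "0 < g (\<pi> j)") (auto, smt (verit) nn)
      qed
      show ?thesis unfolding decomp
        by (intro cone_gen_add cone_gen_scale vmem part) (use s0pos in auto)
    qed
    then show "(\<chi> j. - g (\<pi> j)) \<in> cone_gen ((\<lambda>s. - ind_vec (UNIV - \<pi> -` {i. g i < s})) ` (g ` UNIV \<inter> {0<..}))"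
      unfolding V_def .
  qed
qed

lemma chain_cone:
  fixes \<pi> :: "'n::finite \<Rightarrow> 'm::finite" and g :: "'m \<Rightarrow> real"
  assumes "\<forall>i. 0 \<le> g i"
  shows "(\<chi> j. - g (\<pi> j)) \<in> cone_gen ((\<lambda>s. - ind_vec (UNIV - \<pi> -` {i. g i < s})) ` (g ` UNIV \<inter> {0<..}))"
  using chain_cone_aux[of _ \<pi>] assms by blast

lemma fan_complete:
  fixes \<pi> :: "'n::finite \<Rightarrow> 'm::finite" and w :: "real^'n"
  shows "\<exists>\<sigma>\<in>polystellahedral_fan \<pi>. w \<in> \<sigma>"
proof -
  define g where "g i = Max (insert 0 ((\<lambda>j. - w$j) ` {j. \<pi> j = i}))" for i
  have gge: "0 \<le> g i" for i unfolding g_def by simp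
  have gge2: "- w$j \<le> g (\<pi> j)" for j unfolding g_def by simp
  have gatt: "\<exists>j. \<pi> j = i \<and> g i = - w$j" if "0 < g i" for i
  proof -
    have "g i \<in> insert 0 ((\<lambda>j. - w$j) ` {j. \<pi> j = i})" unfolding g_def by (rule Max_in) auto
    then show ?thesis using that by auto
  qed
  define d where "d j = w$j + g (\<pi> j)" for j
  have dge: "0 \<le> d j" for j using gge2[of j] unfolding d_def by simp
  define I where "I = {j. d j \<noteq> 0}"
  define V where "V = g ` UNIV \<inter> {0<..}"
  have finV: "finite V" unfolding V_def by simp
  define Fs where "Fs = map (\<lambda>s. {i. g i < s}) (sorted_list_of_set V)"
  have setFs: "set Fs = (\<lambda>s. {i. g i < s}) ` V" unfolding Fs_def using finV by simp
  have gens: "(\<lambda>F. - ind_vec (UNIV - \<pi> -` F)) ` set Fs = (\<lambda>s. - ind_vec (UNIV - \<pi> -` {i. g i < s})) ` V"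
    unfolding setFs image_image by (rule refl)
  have pc: "proper_chain Fs"
    unfolding proper_chain_def
  proof
    have "sorted_wrt (<) (sorted_list_of_set V)" by simp
    then have "sorted_wrt (\<lambda>s t. {i. g i < s} \<subset> {i. g i < t}) (sorted_list_of_set V)"
    proof (rule sorted_wrt_mono_rel[rotated])
      fix s t assume "s \<in> set (sorted_list_of_set V)" "t \<in> set (sorted_list_of_set V)" "s < t"
      then have "s \<in> V" "s < t" using finV by auto
      then obtain i where "g i = s" unfolding V_def by auto
      then show "{i. g i < s} \<subset> {i. g i < t}" using \<open>s < t\<close> by auto
    qed
    then show "sorted_wrt (\<subset>) Fs" unfolding Fs_def by (simp add: sorted_wrt_map)
    show "\<forall>F\<in>set Fs. F \<subset> UNIV" unfolding setFs V_def by auto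
  qed
  have cond: "\<forall>A. \<pi> -` A \<subseteq> I \<longrightarrow> A \<subseteq> first_flat Fs"
  proof (intro allI impI subsetI)
    fix A i assume A: "\<pi> -` A \<subseteq> I" and i: "i \<in> A"
    show "i \<in> first_flat Fs"
    proof (cases "Fs = []")
      case True then show ?thesis unfolding first_flat_def by simp
    next
      case False
      then have "hd Fs \<in> set Fs" by simp
      then obtain s where s: "s \<in> V" "hd Fs = {i. g i < s}" unfolding setFs by auto
      have "g i = 0"
      proof (rule ccontr)
        assume "g i \<noteq> 0"
        then have "0 < g i" using gge[of i] by simp
        then obtain j where j: "\<pi> j = i" "g i = - w$j" using gatt by blast
        then have "d j = 0" unfolding d_def by simp
        then have "j \<notin> I" unfolding I_def by simp
        moreover have "j \<in> \<pi> -` A" using j i by simp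
        ultimately show False using A by blast
      qed
      then have "i \<in> hd Fs" using s unfolding V_def by auto
      then show ?thesis using False unfolding first_flat_def by simp
    qed
  qed
  let ?\<sigma> = "cone_gen ((\<lambda>F. - ind_vec (UNIV - \<pi> -` F)) ` set Fs \<union> (\<lambda>j. axis j 1) ` I)"
  have mem: "?\<sigma> \<in> polystellahedral_fan \<pi>"
    unfolding polystellahedral_fan_def using pc cond by blast
  have fin: "finite ((\<lambda>F. - ind_vec (UNIV - \<pi> -` F)) ` set Fs \<union> (\<lambda>j. axis j (1::real)) ` I)" by simp
  have p1: "(\<chi> j. - g (\<pi> j)) \<in> ?\<sigma>"
    using chain_cone[of g \<pi>] gge cone_gen_mono[OF _ fin] gens unfolding V_def by blast
  have p2: "(\<Sum>j\<in>I. d j *\<^sub>R axis j 1) \<in> ?\<sigma>"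
    by (intro cone_gen_sum cone_gen_scale cone_gen_gen fin) (auto simp: dge)
  have weq: "w = (\<Sum>j\<in>I. d j *\<^sub>R axis j 1) + (\<chi> j. - g (\<pi> j))"
  proof (subst vec_eq_iff, intro allI)
    fix k
    have "(\<Sum>j\<in>I. d j *\<^sub>R axis j (1::real)) $ k = (\<Sum>j\<in>I. d j * (if k = j then 1 else 0))"
      by (simp add: axis_def)
    also have "\<dots> = (\<Sum>j\<in>I. if k = j then d j else 0)" by (rule sum.cong) auto
    also have "\<dots> = (if k \<in> I then d k else 0)" by (simp add: sum.delta')
    also have "\<dots> = d k" unfolding I_def by simp
    finally show "w $ k = ((\<Sum>j\<in>I. d j *\<^sub>R axis j 1) + (\<chi> j. - g (\<pi> j))) $ k"
      unfolding d_def by simp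
  qed
  have "w \<in> ?\<sigma>" unfolding weq using p1 p2 by (rule cone_gen_add[rotated])
  then show ?thesis using mem by blast
qed

lemma face_lemma:
  fixes Q :: "(real^'n::finite) set"
  assumes cvx: "convex Q" and fin: "finite G" and yQ: "y \<in> Q"
    and min: "\<And>g z. g \<in> G \<Longrightarrow> z \<in> Q \<Longrightarrow> g \<bullet> y \<le> g \<bullet> z"
  shows "\<exists>C\<in>inner_normal_fan Q. cone_gen G \<subseteq> C"
proof -
  define w0 where "w0 = sum id G"
  have w0i: "w0 \<bullet> x = (\<Sum>g\<in>G. g \<bullet> x)" for x unfolding w0_def by (simp add: inner_sum_left)
  define F where "F = Q \<inter> {x. w0 \<bullet> x = w0 \<bullet> y}"
  have ge: "w0 \<bullet> x \<ge> w0 \<bullet> y" if "x \<in> Q" for x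
    unfolding w0i by (rule sum_mono) (rule min[OF _ that])
  have face: "F face_of Q" unfolding F_def
    by (rule face_of_Int_supporting_hyperplane_ge[OF cvx]) (rule ge)
  have ne: "F \<noteq> {}" using yQ unfolding F_def by auto
  have eq: "g \<bullet> x = g \<bullet> y" if "x \<in> F" "g \<in> G" for x g
  proof -
    have xQ: "x \<in> Q" and s: "(\<Sum>g\<in>G. g \<bullet> x) = (\<Sum>g\<in>G. g \<bullet> y)" using that unfolding F_def w0i by auto
    have "(\<Sum>g\<in>G. g \<bullet> x - g \<bullet> y) = 0" using s by (simp add: sum_subtractf)
    moreover have "\<forall>g\<in>G. 0 \<le> g \<bullet> x - g \<bullet> y" using min xQ by auto
    ultimately have "\<forall>g\<in>G. g \<bullet> x - g \<bullet> y = 0" using sum_nonneg_eq_0_iff[OF fin, of "\<lambda>g. g \<bullet> x - g \<bullet> y"] by simp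
    then show ?thesis using that(2) by simp
  qed
  have c1: "cone_gen G \<subseteq> inner_normal_cone Q F"
    unfolding inner_normal_cone_def
  proof (intro subsetI CollectI ballI)
    fix w x z assume w: "w \<in> cone_gen G" and x: "x \<in> F" and z: "z \<in> Q"
    show "w \<bullet> x \<le> w \<bullet> z"
    proof (rule cone_gen_ineq[OF w])
      fix g assume g: "g \<in> G"
      show "g \<bullet> x \<le> g \<bullet> z" using eq[OF x g] min[OF g z] by simp
    qed
  qed
  have c2: "inner_normal_cone Q F \<in> inner_normal_fan Q"
    unfolding inner_normal_fan_def using face ne by blast
  show ?thesis using c1 c2 by (intro bexI[where x="inner_normal_cone Q F"])
qed

lemma face_lemma_conv:
  fixes Q :: "(real^'n::finite) set"
  assumes fin: "finite G" and C: "C \<in> inner_normal_fan Q" and sub: "cone_gen G \<subseteq> C"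
  shows "\<exists>y\<in>Q. \<forall>g\<in>G. \<forall>z\<in>Q. g \<bullet> y \<le> g \<bullet> z"
proof -
  obtain F where F: "C = inner_normal_cone Q F" "F face_of Q" "F \<noteq> {}"
    using C unfolding inner_normal_fan_def by blast
  obtain y where y: "y \<in> F" using F by blast
  have yQ: "y \<in> Q" using y F(2) face_of_imp_subset by blast
  have "\<forall>g\<in>G. \<forall>z\<in>Q. g \<bullet> y \<le> g \<bullet> z"
  proof (intro ballI)
    fix g z assume g: "g \<in> G" and z: "z \<in> Q"
    have "g \<in> C" using sub cone_gen_gen[OF g fin] by blast
    then show "g \<bullet> y \<le> g \<bullet> z" using y z unfolding F(1) inner_normal_cone_def by blast
  qed
  then show ?thesis using yQ by blast
qed

lemma first_flat_sub:
  assumes "proper_chain Fs" "F \<in> set Fs"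
  shows "first_flat Fs \<subseteq> F"
proof (cases Fs)
  case Nil then show ?thesis using assms by simp
next
  case (Cons a rest)
  then show ?thesis using assms unfolding proper_chain_def first_flat_def by auto
qed

lemma greedy_point:
  fixes \<pi> :: "'n::finite \<Rightarrow> 'm::finite" and rk :: "'m set \<Rightarrow> nat"
  assumes poly: "polymatroid rk" and pc: "proper_chain Fs"
    and cond: "\<forall>A. \<pi> -` A \<subseteq> I \<longrightarrow> A \<subseteq> first_flat Fs"
  shows "\<exists>x. x \<in> independence_polytope (expansion \<pi> rk) \<and> (\<forall>j\<in>I. x$j = 0) \<and>
     (\<forall>F\<in>set Fs. (\<Sum>j\<in>UNIV - \<pi> -` F. x$j) = real (rk (UNIV - F)))"
proof -
  define F1 where "F1 = first_flat Fs"
  define U where "U = UNIV - F1"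
  define ch where "ch i = (SOME j. \<pi> j = i \<and> j \<notin> I)" for i
  have ch: "\<pi> (ch i) = i \<and> ch i \<notin> I" if "i \<in> U" for i
  proof -
    have "\<not> (\<pi> -` {i} \<subseteq> I)" using cond that unfolding U_def F1_def by blast
    then have "\<exists>j. \<pi> j = i \<and> j \<notin> I" by blast
    then show ?thesis unfolding ch_def by (rule someI_ex)
  qed
  define N where "N = card (UNIV :: 'm set)"
  obtain base :: "'m \<Rightarrow> nat" where base: "bij_betw base UNIV {0..<N}"
    using ex_bij_betw_finite_nat[of "UNIV :: 'm set"] unfolding N_def by auto
  have baselt: "base i < N" for i using base by (auto dest: bij_betwE)
  have baseinj: "inj base" using base by (simp add: bij_betw_def)
  define level where "level i = card {F \<in> set Fs. i \<in> F}" for i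
  define ord where "ord i = level i * N + base i" for i
  have ordmod: "ord i mod N = base i" "ord i div N = level i" for i
    unfolding ord_def using baselt[of i] by auto
  have inj: "inj ord"
  proof (rule injI)
    fix i i' assume "ord i = ord i'"
    then have "base i = base i'" using ordmod by metis
    then show "i = i'" using baseinj by (simp add: inj_eq)
  qed
  define y where "y i = real (rk (insert i {i'. ord i' < ord i})) - real (rk {i'. ord i' < ord i})" for i
  have ynn: "0 \<le> y i" for i unfolding y_def by (rule greedy_nonneg[OF poly])
  define x :: "real^'n" where "x = (\<chi> j. \<Sum>i\<in>U. if j = ch i then y i else 0)"
  have sumx: "(\<Sum>j\<in>X. x$j) = (\<Sum>i\<in>U \<inter> {i. ch i \<in> X}. y i)" for X
  proof -
    have "(\<Sum>j\<in>X. x$j) = (\<Sum>j\<in>X. \<Sum>i\<in>U. if j = ch i then y i else 0)" unfolding x_def by simp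
    also have "\<dots> = (\<Sum>i\<in>U. \<Sum>j\<in>X. if j = ch i then y i else 0)" by (rule sum.swap)
    also have "\<dots> = (\<Sum>i\<in>U. if ch i \<in> X then y i else 0)" by (simp add: sum.delta')
    also have "\<dots> = (\<Sum>i\<in>U \<inter> {i. ch i \<in> X}. y i)" by (simp add: sum.inter_restrict)
    finally show ?thesis .
  qed
  have xnn: "0 \<le> x$j" for j unfolding x_def by (simp add: sum_nonneg ynn)
  have xI: "x$j = 0" if "j \<in> I" for j
  proof -
    have "x$j = (\<Sum>i\<in>U. if j = ch i then y i else 0)" unfolding x_def by simp
    also have "\<dots> = 0" by (rule sum.neutral) (use ch that in force)
    finally show ?thesis .
  qed
  have indep: "x \<in> independence_polytope (expansion \<pi> rk)"
    unfolding independence_polytope_def expansion_def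
  proof (intro CollectI conjI allI)
    fix i show "0 \<le> x $ i" by (rule xnn)
  next
    fix S :: "'n set"
    have "(\<Sum>j\<in>S. x$j) = (\<Sum>i\<in>U \<inter> {i. ch i \<in> S}. y i)" by (rule sumx)
    also have "\<dots> \<le> (\<Sum>i\<in>\<pi> ` S. y i)"
    proof (rule sum_mono2)
      show "U \<inter> {i. ch i \<in> S} \<subseteq> \<pi> ` S"
      proof
        fix i assume "i \<in> U \<inter> {i. ch i \<in> S}"
        then show "i \<in> \<pi> ` S" using ch[of i] by (metis IntD1 IntD2 image_eqI mem_Collect_eq)
      qed
    qed (auto simp: ynn)
    also have "\<dots> \<le> real (rk (\<pi> ` S))" unfolding y_def by (rule greedy(1)[OF poly inj])
    finally show "(\<Sum>j\<in>S. x$j) \<le> real (rk (\<pi> ` S))" .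
  qed
  have tight: "(\<Sum>j\<in>UNIV - \<pi> -` F. x$j) = real (rk (UNIV - F))" if F: "F \<in> set Fs" for F
  proof -
    have sub: "UNIV - F \<subseteq> U" using first_flat_sub[OF pc F] unfolding U_def F1_def by auto
    have "U \<inter> {i. ch i \<in> UNIV - \<pi> -` F} = UNIV - F"
      using sub ch by auto
    then have "(\<Sum>j\<in>UNIV - \<pi> -` F. x$j) = (\<Sum>i\<in>UNIV - F. y i)" using sumx by simp
    also have "\<dots> = real (rk (UNIV - F))" unfolding y_def
    proof (rule greedy(2)[OF poly inj], intro ballI allI impI)
      fix i i' assume i: "i \<in> UNIV - F" and lt: "ord i' < ord i"
      show "i' \<in> UNIV - F"
      proof (rule ccontr)
        assume "i' \<notin> UNIV - F"
        then have i'F: "i' \<in> F" by simp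
        have psub: "{F' \<in> set Fs. i \<in> F'} \<subset> {F' \<in> set Fs. i' \<in> F'}"
        proof
          show "{F' \<in> set Fs. i \<in> F'} \<subseteq> {F' \<in> set Fs. i' \<in> F'}"
          proof
            fix F' assume F': "F' \<in> {F' \<in> set Fs. i \<in> F'}"
            then have "F' = F \<or> F' \<subset> F \<or> F \<subset> F'"
              using sorted_wrt_cmp[of "(\<subset>)" Fs F' F] pc F unfolding proper_chain_def by blast
            then have "F \<subset> F'" using F' i by auto
            then show "F' \<in> {F' \<in> set Fs. i' \<in> F'}" using F' i'F by auto
          qed
          show "{F' \<in> set Fs. i \<in> F'} \<noteq> {F' \<in> set Fs. i' \<in> F'}" using F i i'F by auto
        qed
        then have "level i < level i'" unfolding level_def by (simp add: psubset_card_mono)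
        then have "level i * N + base i < level i' * N + base i'"
        proof -
          assume "level i < level i'"
          then have "Suc (level i) * N \<le> level i' * N" by (intro mult_le_mono1 Suc_leI)
          then show ?thesis using baselt[of i] by simp
        qed
        then show False using lt unfolding ord_def by simp
      qed
    qed
    finally show ?thesis .
  qed
  show ?thesis using indep xI tight by blast
qed

lemma fan_memE:
  assumes "\<sigma> \<in> polystellahedral_fan \<pi>"
  obtains Fs I where "proper_chain Fs" "\<forall>A. \<pi> -` A \<subseteq> I \<longrightarrow> A \<subseteq> first_flat Fs"
    "\<sigma> = cone_gen ((\<lambda>F. - ind_vec (UNIV - \<pi> -` F)) ` set Fs \<union> (\<lambda>j. axis j 1) ` I)"
  using assms unfolding polystellahedral_fan_def by blast

lemma fan_memI:
  assumes "proper_chain Fs" "\<forall>A. \<pi> -` A \<subseteq> I \<longrightarrow> A \<subseteq> first_flat Fs"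
  shows "cone_gen ((\<lambda>F. - ind_vec (UNIV - \<pi> -` F)) ` set Fs \<union> (\<lambda>j. axis j 1) ` I) \<in> polystellahedral_fan \<pi>"
  using assms unfolding polystellahedral_fan_def by blast

lemma fan_union: "\<Union> (polystellahedral_fan \<pi>) = UNIV"
  using fan_complete[of \<pi>] by blast

lemma backward:
  fixes \<pi> :: "'n::finite \<Rightarrow> 'm::finite" and rk :: "'m set \<Rightarrow> nat" and t :: "real^'n"
  assumes poly: "polymatroid rk" and cvx: "convex Q"
    and Qeq: "Q = (\<lambda>x. t + x) ` independence_polytope (expansion \<pi> rk)"
  shows "is_deformation_of Q (polystellahedral_fan \<pi>)"
proof -
  have mono: "rk A \<le> rk B" if "A \<subseteq> B" for A B using poly that unfolding polymatroid_def by blast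
  have part1: "\<exists>C\<in>inner_normal_fan Q. \<sigma> \<subseteq> C" if s: "\<sigma> \<in> polystellahedral_fan \<pi>" for \<sigma>
  proof -
    obtain Fs I where pc: "proper_chain Fs" and cond: "\<forall>A. \<pi> -` A \<subseteq> I \<longrightarrow> A \<subseteq> first_flat Fs"
      and seq: "\<sigma> = cone_gen ((\<lambda>F. - ind_vec (UNIV - \<pi> -` F)) ` set Fs \<union> (\<lambda>j. axis j 1) ` I)"
      using s by (rule fan_memE)
    let ?G = "(\<lambda>F. - ind_vec (UNIV - \<pi> -` F)) ` set Fs \<union> (\<lambda>j. axis j (1::real)) ` I"
    obtain x where x: "x \<in> independence_polytope (expansion \<pi> rk)" "\<forall>j\<in>I. x$j = 0"
      "\<forall>F\<in>set Fs. (\<Sum>j\<in>UNIV - \<pi> -` F. x$j) = real (rk (UNIV - F))"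
      using greedy_point[OF poly pc cond] by blast
    have yQ: "t + x \<in> Q" unfolding Qeq using x(1) by blast
    have min: "g \<bullet> (t + x) \<le> g \<bullet> z" if g: "g \<in> ?G" and z: "z \<in> Q" for g z
    proof -
      obtain z' where z': "z = t + z'" "z' \<in> independence_polytope (expansion \<pi> rk)"
        using z unfolding Qeq by blast
      have z'nn: "0 \<le> z'$j" for j using z'(2) unfolding independence_polytope_def by blast
      have z'S: "(\<Sum>j\<in>S. z'$j) \<le> real (rk (\<pi> ` S))" for S
        using z'(2) unfolding independence_polytope_def expansion_def by blast
      have "g \<bullet> x \<le> g \<bullet> z'"
        using g
      proof
        assume "g \<in> (\<lambda>F. - ind_vec (UNIV - \<pi> -` F)) ` set Fs"
        then obtain F where F: "F \<in> set Fs" "g = - ind_vec (UNIV - \<pi> -` F)" by blast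
        have "(\<Sum>j\<in>UNIV - \<pi> -` F. z'$j) \<le> real (rk (\<pi> ` (UNIV - \<pi> -` F)))" by (rule z'S)
        also have "\<dots> \<le> real (rk (UNIV - F))" by (rule of_nat_mono, rule mono) auto
        finally show ?thesis using F x(3) by (simp add: ind_vec_inner)
      next
        assume "g \<in> (\<lambda>j. axis j 1) ` I"
        then obtain j where j: "j \<in> I" "g = axis j 1" by blast
        show ?thesis using j x(2) z'nn[of j] by (simp add: axis_inner)
      qed
      then show ?thesis unfolding z'(1) by (simp add: inner_add_right)
    qed
    have "\<exists>C\<in>inner_normal_fan Q. cone_gen ?G \<subseteq> C"
      by (rule face_lemma[OF cvx _ yQ min]) auto
    then show ?thesis unfolding seq .
  qed
  have part2: "\<Union> (inner_normal_fan Q) = \<Union> (polystellahedral_fan \<pi>)"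
  proof -
    have "UNIV \<subseteq> \<Union> (inner_normal_fan Q)"
    proof
      fix w :: "real^'n"
      obtain \<sigma> where "\<sigma> \<in> polystellahedral_fan \<pi>" "w \<in> \<sigma>" using fan_complete[of \<pi> w] by blast
      then show "w \<in> \<Union> (inner_normal_fan Q)" using part1 by blast
    qed
    then show ?thesis using fan_union[of \<pi>] by blast
  qed
  show ?thesis unfolding is_deformation_of_def coarsens_def using part1 part2 by blast
qed

lemma forward:
  fixes \<pi> :: "'n::finite \<Rightarrow> 'm::finite" and Q :: "(real^'n) set"
  assumes lat: "lattice_polytope Q" and def: "is_deformation_of Q (polystellahedral_fan \<pi>)"
  shows "\<exists>rk t. polymatroid rk \<and> Q = (\<lambda>x. t + x) ` independence_polytope (expansion \<pi> rk)"
proof -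
  obtain S where finS: "finite S" and intS: "\<forall>x\<in>S. \<forall>i. x $ i \<in> \<int>" and QS: "Q = convex hull S"
    using lat unfolding lattice_polytope_def by blast
  have cvx: "convex Q" unfolding QS by simp
  have SQ: "S \<subseteq> Q" unfolding QS by (rule hull_subset)
  have clQ: "closed Q" unfolding QS using finS by (simp add: compact_imp_closed compact_convex_hull finite_imp_compact)
  have cm: "\<forall>\<sigma>\<in>polystellahedral_fan \<pi>. \<exists>C\<in>inner_normal_fan Q. \<sigma> \<subseteq> C"
    using def unfolding is_deformation_of_def coarsens_def by blast
  have key: "\<exists>y\<in>Q. \<forall>g\<in>(\<lambda>F. - ind_vec (UNIV - \<pi> -` F)) ` set Fs \<union> (\<lambda>j. axis j 1) ` I. \<forall>z\<in>Q. g \<bullet> y \<le> g \<bullet> z"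
    if pc: "proper_chain Fs" and cond: "\<forall>A. \<pi> -` A \<subseteq> I \<longrightarrow> A \<subseteq> first_flat Fs" for Fs I
  proof -
    obtain C where C: "C \<in> inner_normal_fan Q"
      "cone_gen ((\<lambda>F. - ind_vec (UNIV - \<pi> -` F)) ` set Fs \<union> (\<lambda>j. axis j 1) ` I) \<subseteq> C"
      using cm fan_memI[OF pc cond] by blast
    show ?thesis by (rule face_lemma_conv[OF _ C]) simp
  qed
  have pc0: "proper_chain ([] :: 'm set list)" unfolding proper_chain_def by simp
  have cond0: "\<forall>A. \<pi> -` A \<subseteq> UNIV \<longrightarrow> A \<subseteq> first_flat ([] :: 'm set list)" unfolding first_flat_def by simp
  obtain t where tQ: "t \<in> Q" and tmin0: "\<forall>g\<in>(\<lambda>F. - ind_vec (UNIV - \<pi> -` F)) ` set ([] :: 'm set list) \<union> (\<lambda>j. axis j 1) ` UNIV. \<forall>z\<in>Q. g \<bullet> t \<le> g \<bullet> z"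
    using key[OF pc0 cond0] by blast
  have tmin: "t$j \<le> z$j" if "z \<in> Q" for j z using tmin0 that by (auto simp: axis_inner)
  have Sne: "S \<noteq> {}" using tQ unfolding QS by auto
  have tint: "t$j \<in> \<int>" for j
  proof -
    define m where "m = Min ((\<lambda>s. s$j) ` S)"
    obtain s0 where s0: "s0 \<in> S" "s0$j = m" unfolding m_def using finS Sne
      by (metis (no_types, lifting) Min_in finite_imageI image_iff image_is_empty)
    have "Q \<subseteq> {x. m \<le> x$j}" unfolding QS
    proof (rule hull_minimal)
      show "S \<subseteq> {x. m \<le> x$j}" unfolding m_def using finS by auto
      have "{x. m \<le> x$j} = {x::real^'n. axis j 1 \<bullet> x \<ge> m}" by (simp add: axis_inner)
      then show "convex {x. m \<le> x$j}" by (simp add: convex_halfspace_ge)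
    qed
    then have "m \<le> t$j" using tQ by blast
    moreover have "t$j \<le> s0$j" using tmin SQ s0(1) by blast
    ultimately have "t$j = s0$j" using s0(2) by simp
    then show ?thesis using intS s0(1) by simp
  qed
  define f where "f A x = (\<Sum>j\<in>\<pi> -` A. x$j - t$j)" for A x
  define h where "h A = Max (f A ` S)" for A
  have fsplit: "f A x = ind_vec (\<pi> -` A) \<bullet> x - (\<Sum>j\<in>\<pi> -` A. t$j)" for A x
    unfolding f_def by (simp add: ind_vec_inner sum_subtractf)
  have hS: "\<exists>s\<in>S. f A s = h A" for A
    unfolding h_def using finS Sne by (metis (no_types, lifting) Max_in finite_imageI image_iff image_is_empty)
  have hQ: "f A x \<le> h A" if "x \<in> Q" for A x
  proof -
    have "Q \<subseteq> {x. ind_vec (\<pi> -` A) \<bullet> x \<le> h A + (\<Sum>j\<in>\<pi> -` A. t$j)}" unfolding QS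
    proof (rule hull_minimal)
      show "S \<subseteq> {x. ind_vec (\<pi> -` A) \<bullet> x \<le> h A + (\<Sum>j\<in>\<pi> -` A. t$j)}"
      proof
        fix s assume "s \<in> S"
        then have "f A s \<le> h A" unfolding h_def using finS by simp
        then show "s \<in> {x. ind_vec (\<pi> -` A) \<bullet> x \<le> h A + (\<Sum>j\<in>\<pi> -` A. t$j)}" unfolding fsplit by simp
      qed
    qed (rule convex_halfspace_le)
    then show ?thesis using that unfolding fsplit by auto
  qed
  have fnn: "0 \<le> f A x" if "x \<in> Q" for A x
    unfolding f_def by (rule sum_nonneg) (use tmin that in auto)
  have fint: "f A s \<in> \<int>" if "s \<in> S" for A s
    unfolding f_def using intS that tint by (intro Ints_sum Ints_diff) auto
  have hint: "h A \<in> \<int>" for A using hS[of A] fint by metis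
  have hnn: "0 \<le> h A" for A using hS[of A] fnn SQ by (metis subsetD)
  have maxQ: "f A y = h A" if y: "y \<in> Q" and ym: "\<forall>z\<in>Q. f A z \<le> f A y" for A y
    using hS[of A] hQ[OF y, of A] ym SQ by (metis antisym subsetD)
  have fR: "f A = f (A \<inter> range \<pi>)" for A
  proof -
    have "\<pi> -` A = \<pi> -` (A \<inter> range \<pi>)" by auto
    then show ?thesis unfolding f_def by (simp add: fun_eq_iff)
  qed
  have hR: "h A = h (A \<inter> range \<pi>)" for A unfolding h_def using fR by metis
  have fmono: "f A x \<le> f B x" if "A \<subseteq> B" "x \<in> Q" for A B x
    unfolding f_def by (rule sum_mono2) (use that tmin in auto)
  have hmono: "h A \<le> h B" if "A \<subseteq> B" for A B
  proof -
    obtain s where s: "s \<in> S" "f A s = h A" using hS by blast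
    then show ?thesis using fmono[OF that, of s] hQ[of s B] SQ by force
  qed
  have fmod: "f (A \<union> B) x + f (A \<inter> B) x = f A x + f B x" for A B x
  proof -
    have "f (A \<union> B) x + f (A \<inter> B) x = (\<Sum>j\<in>\<pi> -` A \<union> \<pi> -` B. x$j - t$j) + (\<Sum>j\<in>\<pi> -` A \<inter> \<pi> -` B. x$j - t$j)"
      unfolding f_def by (simp add: vimage_Un vimage_Int)
    also have "\<dots> = f A x + f B x" unfolding f_def by (rule sum.union_inter) auto
    finally show ?thesis .
  qed
  have f0: "f {} x = 0" for x unfolding f_def by simp
  have h0: "h {} = 0" unfolding h_def using Sne finS by (simp add: f0 image_constant_conv)
  have gen_max: "\<forall>z\<in>Q. f X z \<le> f X y"
    if "\<forall>z\<in>Q. (- ind_vec (UNIV - \<pi> -` (UNIV - X))) \<bullet> y \<le> (- ind_vec (UNIV - \<pi> -` (UNIV - X))) \<bullet> z" for X y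
  proof
    fix z assume z: "z \<in> Q"
    have "UNIV - \<pi> -` (UNIV - X) = \<pi> -` X" by auto
    then have "ind_vec (\<pi> -` X) \<bullet> z \<le> ind_vec (\<pi> -` X) \<bullet> y" using that z by simp
    then show "f X z \<le> f X y" unfolding fsplit by simp
  qed
  have submod: "h (A \<union> B) + h (A \<inter> B) \<le> h A + h B" for A B
  proof -
    define U where "U = (A \<union> B) \<inter> range \<pi>"
    define W where "W = (A \<inter> B) \<inter> range \<pi>"
    have hU: "h (A \<union> B) = h U" "h (A \<inter> B) = h W" unfolding U_def W_def using hR by blast+
    have fU: "f (A \<union> B) = f U" "f (A \<inter> B) = f W" unfolding U_def W_def using fR by blast+
    have WU: "W \<subseteq> U" unfolding U_def W_def by auto
    have "\<exists>x\<in>Q. f U x = h U \<and> f W x = h W"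
    proof (cases "W = U")
      case True
      obtain s where "s \<in> S" "f U s = h U" using hS by blast
      then show ?thesis using True SQ by blast
    next
      case WneU: False
      show ?thesis
      proof (cases "W = {}")
        case True
        obtain s where s: "s \<in> S" "f U s = h U" using hS by blast
        have "f W s = h W" using True f0 h0 by simp
        then show ?thesis using s SQ by blast
      next
        case False
        let ?Fs = "[UNIV - U, UNIV - W]"
        have pc: "proper_chain ?Fs" unfolding proper_chain_def using WU WneU False by auto
        have cond: "\<forall>A'. \<pi> -` A' \<subseteq> {} \<longrightarrow> A' \<subseteq> first_flat ?Fs"
          unfolding first_flat_def U_def by auto
        obtain y where y: "y \<in> Q" and ym: "\<forall>g\<in>(\<lambda>F. - ind_vec (UNIV - \<pi> -` F)) ` set ?Fs \<union> (\<lambda>j. axis j 1) ` {}. \<forall>z\<in>Q. g \<bullet> y \<le> g \<bullet> z"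
          using key[OF pc cond] by blast
        have "\<forall>z\<in>Q. f U z \<le> f U y" by (rule gen_max) (use ym in simp)
        moreover have "\<forall>z\<in>Q. f W z \<le> f W y" by (rule gen_max) (use ym in simp)
        ultimately show ?thesis using maxQ y by blast
      qed
    qed
    then obtain x where x: "x \<in> Q" "f U x = h U" "f W x = h W" by blast
    have "h (A \<union> B) + h (A \<inter> B) = f A x + f B x" using fmod[of A B x] hU fU x by simp
    also have "\<dots> \<le> h A + h B" using hQ[OF x(1)] by (simp add: add_mono)
    finally show ?thesis .
  qed
  define rk where "rk A = nat \<lfloor>h A\<rfloor>" for A
  have rkh: "real (rk A) = h A" for A
  proof -
    obtain k where k: "h A = of_int k" using hint[of A] by (auto elim: Ints_cases)
    then show ?thesis unfolding rk_def using hnn[of A] by simp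
  qed
  have poly: "polymatroid rk"
    unfolding polymatroid_def
  proof (intro conjI allI impI)
    show "rk {} = 0" using rkh[of "{}"] h0 by simp
  next
    fix A B :: "'m set" assume "A \<subseteq> B"
    then have "real (rk A) \<le> real (rk B)" unfolding rkh by (rule hmono)
    then show "rk A \<le> rk B" by simp
  next
    fix A B :: "'m set"
    have "real (rk (A \<union> B) + rk (A \<inter> B)) \<le> real (rk A + rk B)" unfolding of_nat_add rkh by (rule submod)
    then show "rk (A \<union> B) + rk (A \<inter> B) \<le> rk A + rk B" by (simp only: of_nat_le_iff)
  qed
  have indep_iff: "z \<in> independence_polytope (expansion \<pi> rk) \<longleftrightarrow>
      (\<forall>i. 0 \<le> z$i) \<and> (\<forall>S'. (\<Sum>i\<in>S'. z$i) \<le> h (\<pi> ` S'))" for z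
    unfolding independence_polytope_def expansion_def rkh by simp
  have "Q = (\<lambda>x. t + x) ` independence_polytope (expansion \<pi> rk)"
  proof (intro equalityI subsetI)
    fix x assume x: "x \<in> Q"
    have "x - t \<in> independence_polytope (expansion \<pi> rk)" unfolding indep_iff
    proof (intro conjI allI)
      fix i show "0 \<le> (x - t)$i" using tmin[OF x] by simp
    next
      fix S' :: "'n set"
      have "(\<Sum>i\<in>S'. (x - t)$i) \<le> (\<Sum>i\<in>\<pi> -` (\<pi> ` S'). (x - t)$i)"
        by (rule sum_mono2) (use tmin[OF x] in auto)
      also have "\<dots> = f (\<pi> ` S') x" unfolding f_def by simp
      also have "\<dots> \<le> h (\<pi> ` S')" by (rule hQ[OF x])
      finally show "(\<Sum>i\<in>S'. (x - t)$i) \<le> h (\<pi> ` S')" .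
    qed
    then show "x \<in> (\<lambda>x. t + x) ` independence_polytope (expansion \<pi> rk)"
      by (rule image_eqI[rotated]) simp
  next
    fix x assume "x \<in> (\<lambda>x. t + x) ` independence_polytope (expansion \<pi> rk)"
    then obtain z where xz: "x = t + z" and z: "z \<in> independence_polytope (expansion \<pi> rk)" by blast
    have znn: "0 \<le> z$i" for i using z unfolding indep_iff by blast
    have zS: "(\<Sum>i\<in>S'. z$i) \<le> h (\<pi> ` S')" for S' using z unfolding indep_iff by blast
    show "x \<in> Q"
    proof (rule ccontr)
      assume "x \<notin> Q"
      then obtain a b where ab: "a \<bullet> x < b" "\<forall>y\<in>Q. b < a \<bullet> y"
        using separating_hyperplane_closed_point[OF cvx clQ] by blast
      obtain \<sigma> where \<sigma>: "\<sigma> \<in> polystellahedral_fan \<pi>" "a \<in> \<sigma>" using fan_complete[of \<pi> a] by blast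
      obtain Fs I where pc: "proper_chain Fs" and cond: "\<forall>A. \<pi> -` A \<subseteq> I \<longrightarrow> A \<subseteq> first_flat Fs"
        and seq: "\<sigma> = cone_gen ((\<lambda>F. - ind_vec (UNIV - \<pi> -` F)) ` set Fs \<union> (\<lambda>j. axis j 1) ` I)"
        using \<sigma>(1) by (rule fan_memE)
      obtain y where y: "y \<in> Q" and ym: "\<forall>g\<in>(\<lambda>F. - ind_vec (UNIV - \<pi> -` F)) ` set Fs \<union> (\<lambda>j. axis j 1) ` I. \<forall>z\<in>Q. g \<bullet> y \<le> g \<bullet> z"
        using key[OF pc cond] by blast
      have "a \<bullet> y \<le> a \<bullet> x"
      proof (rule cone_gen_ineq)
        show "a \<in> cone_gen ((\<lambda>F. - ind_vec (UNIV - \<pi> -` F)) ` set Fs \<union> (\<lambda>j. axis j 1) ` I)"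
          using \<sigma>(2) seq by simp
      next
        fix g assume g: "g \<in> (\<lambda>F. - ind_vec (UNIV - \<pi> -` F)) ` set Fs \<union> (\<lambda>j. axis j 1) ` I"
        then show "g \<bullet> y \<le> g \<bullet> x"
        proof
          assume "g \<in> (\<lambda>F. - ind_vec (UNIV - \<pi> -` F)) ` set Fs"
          then obtain F where F: "F \<in> set Fs" "g = - ind_vec (UNIV - \<pi> -` F)" by blast
          define X where "X = UNIV - F"
          have FX: "UNIV - \<pi> -` F = \<pi> -` X" "F = UNIV - X" unfolding X_def by auto
          have gm: "g \<bullet> y \<le> g \<bullet> z" if "z \<in> Q" for z using ym g that by blast
          have ymX: "\<forall>z\<in>Q. f X z \<le> f X y"
          proof (rule gen_max, intro ballI)
            fix z assume "z \<in> Q"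
            then show "(- ind_vec (UNIV - \<pi> -` (UNIV - X))) \<bullet> y \<le> (- ind_vec (UNIV - \<pi> -` (UNIV - X))) \<bullet> z"
              using gm F(2) FX(2) by simp
          qed
          have fy: "f X y = h X" by (rule maxQ[OF y ymX])
          have "\<pi> -` (\<pi> ` (\<pi> -` X)) = \<pi> -` X" by auto
          then have "f (\<pi> ` (\<pi> -` X)) = f X" unfolding f_def by (simp add: fun_eq_iff)
          then have hX: "h (\<pi> ` (\<pi> -` X)) = h X" unfolding h_def by simp
          have "(\<Sum>i\<in>\<pi> -` X. z$i) \<le> h X" using zS[of "\<pi> -` X"] hX by simp
          then have "(\<Sum>i\<in>\<pi> -` X. z$i) \<le> (\<Sum>j\<in>\<pi> -` X. y$j) - (\<Sum>j\<in>\<pi> -` X. t$j)"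
            using fy unfolding f_def by (simp add: sum_subtractf)
          then show "g \<bullet> y \<le> g \<bullet> x"
            unfolding F(2) FX(1) xz by (simp add: ind_vec_inner sum.distrib)
        next
          assume "g \<in> (\<lambda>j. axis j 1) ` I"
          then obtain j where j: "g = axis j 1" by blast
          have "g \<bullet> y \<le> g \<bullet> t" using ym g tQ by blast
          then have "y$j \<le> t$j" using j by (simp add: axis_inner)
          then show "g \<bullet> y \<le> g \<bullet> x" using j znn[of j] xz by (simp add: axis_inner)
        qed
      qed
      then show False using ab y by fastforce
    qed
  qed
  then show ?thesis using poly by blast
qed

theorem proposition2p7:
  fixes \<pi> :: "'n::finite \<Rightarrow> 'm::finite"
    and Q :: "(real^'n) set"
  assumes "lattice_polytope Q"
  shows "is_deformation_of Q (polystellahedral_fan \<pi>) \<longleftrightarrow>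
         (\<exists>rk t. polymatroid rk \<and>
             Q = (\<lambda>x. t + x) ` independence_polytope (expansion \<pi> rk))"
proof
  assume "is_deformation_of Q (polystellahedral_fan \<pi>)"
  then show "\<exists>rk t. polymatroid rk \<and> Q = (\<lambda>x. t + x) ` independence_polytope (expansion \<pi> rk)"
    using forward[OF assms] by blast
next
  assume "\<exists>rk t. polymatroid rk \<and> Q = (\<lambda>x. t + x) ` independence_polytope (expansion \<pi> rk)"
  then obtain rk t where "polymatroid rk" "Q = (\<lambda>x. t + x) ` independence_polytope (expansion \<pi> rk)" by blast
  moreover have "convex Q" using assms unfolding lattice_polytope_def by auto
  ultimately show "is_deformation_of Q (polystellahedral_fan \<pi>)" by (intro backward)
qed

end
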